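(* Fix $d\ge1$. The set of $F$-norms on $\mathbb{R}^{d+1}$, equipped with the multiplication $*$, is a commutative monoid with identity element the sup-norm $\|\mathbf{x}\|_\infty=\max_{0\le i\le d}|x_i|$. The only invertible elements are the $F$-norms generated by nonrandom vectors.
   Context: Condition $(\mathcal{H})$ on a random vector $\mathbf{X}=(X_1,\dots,X_d)$: each $X_i$ is almost surely nonnegative with $0<E(X_i)<\infty$. For such $\mathbf{X}$ with distribution function $F$, the $F$-norm is $\|\mathbf{x}\|_F=E(\max(|x_0|,|x_1|X_1,\dots,|x_d|X_d))$, $\mathbf{x}\in\mathbb{R}^{d+1}$; $\mathbf{X}$ is said to generate it, and an $F$-norm is any norm on $\mathbb{R}^{d+1}$ of this form. The product $\|\cdot\|_F*\|\cdot\|_G$ is the $F$-norm generated by the componentwise product $(X_1Y_1,\dots,X_dY_d)$, where $\mathbf{X}\sim F$ and $\mathbf{Y}\sim G$ are independent and satisfy $(\mathcal{H})$. An $F$-norm generated by a nonrandom vector $\mathbf{c}>\mathbf{0}$ is $\max(|x_0|,c_1|x_1|,\dots,c_d|x_d|)$. *)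

theory Defs
  imports "HOL-Probability.Probability" "HOL-Algebra.Group"
begin

text \<open>Vectors of R^(d+1) are represented as functions nat => real; only the
coordinates 0..d matter. A random vector (X_1,...,X_d) is represented by its
distribution, a measure on the product space indexed by {1..d}.\<close>

definition vec_space :: "nat \<Rightarrow> (nat \<Rightarrow> real) measure" where
  "vec_space d = PiM {1..d} (\<lambda>_. borel)"

definition condH :: "nat \<Rightarrow> (nat \<Rightarrow> real) measure \<Rightarrow> bool" where
  "condH d P \<longleftrightarrow> prob_space P \<and> sets P = sets (vec_space d) \<and>
     (\<forall>i\<in>{1..d}. (AE y in P. 0 \<le> y i) \<and> integrable P (\<lambda>y. y i) \<and>
                   0 < integral\<^sup>L P (\<lambda>y. y i))"

definition fnorm :: "nat \<Rightarrow> (nat \<Rightarrow> real) measure \<Rightarrow> (nat \<Rightarrow> real) \<Rightarrow> real" where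
  "fnorm d P x = integral\<^sup>L P (\<lambda>y. Max (insert \<bar>x 0\<bar> ((\<lambda>i. \<bar>x i\<bar> * y i) ` {1..d})))"

definition fnorms :: "nat \<Rightarrow> ((nat \<Rightarrow> real) \<Rightarrow> real) set" where
  "fnorms d = {fnorm d P | P. condH d P}"

text \<open>Distribution of the componentwise product (X_1 Y_1, ..., X_d Y_d) of
independent X ~ P and Y ~ Q.\<close>
definition prod_gen :: "nat \<Rightarrow> (nat \<Rightarrow> real) measure \<Rightarrow> (nat \<Rightarrow> real) measure
                         \<Rightarrow> (nat \<Rightarrow> real) measure" where
  "prod_gen d P Q = distr (P \<Otimes>\<^sub>M Q) (vec_space d) (\<lambda>(y, z). \<lambda>i\<in>{1..d}. y i * z i)"

definition fmult :: "nat \<Rightarrow> ((nat \<Rightarrow> real) \<Rightarrow> real) \<Rightarrow> ((nat \<Rightarrow> real) \<Rightarrow> real)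
                      \<Rightarrow> ((nat \<Rightarrow> real) \<Rightarrow> real)" where
  "fmult d N1 N2 = fnorm d (prod_gen d (SOME P. condH d P \<and> fnorm d P = N1)
                                     (SOME Q. condH d Q \<and> fnorm d Q = N2))"

definition sup_norm :: "nat \<Rightarrow> (nat \<Rightarrow> real) \<Rightarrow> real" where
  "sup_norm d x = Max ((\<lambda>i. \<bar>x i\<bar>) ` {0..d})"

definition const_gen :: "nat \<Rightarrow> (nat \<Rightarrow> real) \<Rightarrow> (nat \<Rightarrow> real) measure" where
  "const_gen d c = return (vec_space d) (restrict c {1..d})"

definition fnorm_monoid :: "nat \<Rightarrow> ((nat \<Rightarrow> real) \<Rightarrow> real) monoid" where
  "fnorm_monoid d = \<lparr>carrier = fnorms d, mult = fmult d, one = sup_norm d\<rparr>"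

end

theory Submission
  imports Defs
begin

definition Gf :: "nat \<Rightarrow> (nat\<Rightarrow>real) \<Rightarrow> (nat\<Rightarrow>real) \<Rightarrow> real" where
  "Gf d x y = Max (insert \<bar>x 0\<bar> ((\<lambda>i. \<bar>x i\<bar> * y i) ` {1..d}))"

definition nfn :: "nat \<Rightarrow> (nat \<Rightarrow> real) measure \<Rightarrow> (nat \<Rightarrow> real) \<Rightarrow> ennreal" where
  "nfn d P x = (\<integral>\<^sup>+y. ennreal (Gf d x y) \<partial>P)"

definition pmul :: "nat \<Rightarrow> (nat\<Rightarrow>real) \<Rightarrow> (nat\<Rightarrow>real) \<Rightarrow> (nat\<Rightarrow>real)" where
  "pmul d y z = (\<lambda>i\<in>{1..d}. y i * z i)"

lemma Gf_nonneg: "0 \<le> Gf d x y"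
  unfolding Gf_def by (rule order.trans[OF abs_ge_zero Max_ge]) auto

lemma Gf_alt: "Gf d x y = Max ((\<lambda>i. if i = 0 then \<bar>x 0\<bar> else \<bar>x i\<bar> * y i) ` {0..d})"
proof -
  have "{0..d} = insert 0 {1..d}" by auto
  then show ?thesis unfolding Gf_def by (auto intro!: arg_cong[where f=Max] image_cong)
qed

lemma Gf_meas[measurable]: "Gf d x \<in> borel_measurable (vec_space d)"
proof -
  have "(\<lambda>y. Max ((\<lambda>i. if i = 0 then \<bar>x 0\<bar> else \<bar>x i\<bar> * y i) ` {0..d})) \<in> borel_measurable (vec_space d)"
    unfolding vec_space_def
  proof (intro borel_measurable_Max)
    fix i assume i: "i \<in> {0..d}"
    show "(\<lambda>y. if i = 0 then \<bar>x 0\<bar> else \<bar>x i\<bar> * y i) \<in> borel_measurable (PiM {1..d} (\<lambda>_. borel))"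
    proof (cases "i = 0")
      case False
      then have "i \<in> {1..d}" using i by auto
      then show ?thesis using False by measurable
    qed simp
  qed simp
  then show ?thesis unfolding Gf_alt[abs_def] .
qed

lemma Gf_cong: "(\<And>i. i \<in> {1..d} \<Longrightarrow> y i = y' i) \<Longrightarrow> Gf d x y = Gf d x y'"
  unfolding Gf_def by (auto intro!: arg_cong[where f=Max] image_cong)

lemma pmul_meas[measurable]: "(\<lambda>p. pmul d (fst p) (snd p)) \<in> measurable (vec_space d \<Otimes>\<^sub>M vec_space d) (vec_space d)"
  unfolding pmul_def vec_space_def
  by measurable

lemma Gf_bound: "Gf d x y \<le> \<bar>x 0\<bar> + (\<Sum>i\<in>{1..d}. \<bar>x i\<bar> * \<bar>y i\<bar>)"
proof -
  have s: "\<And>j. j \<in> {1..d} \<Longrightarrow> \<bar>x j\<bar> * \<bar>y j\<bar> \<le> (\<Sum>i\<in>{1..d}. \<bar>x i\<bar> * \<bar>y i\<bar>)"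
    by (rule member_le_sum) auto
  have "0 \<le> (\<Sum>i\<in>{1..d}. \<bar>x i\<bar> * \<bar>y i\<bar>)" by (intro sum_nonneg) auto
  moreover have "\<And>j. \<bar>x j\<bar> * y j \<le> \<bar>x j\<bar> * \<bar>y j\<bar>" by (simp add: mult_left_mono)
  ultimately show ?thesis unfolding Gf_def using s
    by (auto intro!: Max.boundedI simp: add_increasing2) (smt (verit, best))
qed

lemma meas_cong_vs: "sets P = sets (vec_space d) \<Longrightarrow> f \<in> borel_measurable (vec_space d) \<Longrightarrow> f \<in> borel_measurable P"
  using measurable_cong_sets by blast

lemma fnorm_nfn: assumes "sets P = sets (vec_space d)" shows "fnorm d P x = enn2real (nfn d P x)"
  unfolding fnorm_def nfn_def Gf_def[symmetric]
  by (rule integral_eq_nn_integral) (auto intro: meas_cong_vs[OF assms] simp: Gf_nonneg)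

lemma condH_D: assumes "condH d P"
  shows "prob_space P" "sets P = sets (vec_space d)" "space P = space (vec_space d)"
    "\<And>i. i \<in> {1..d} \<Longrightarrow> AE y in P. 0 \<le> y i"
    "\<And>i. i \<in> {1..d} \<Longrightarrow> integrable P (\<lambda>y. y i)"
    "\<And>i. i \<in> {1..d} \<Longrightarrow> 0 < integral\<^sup>L P (\<lambda>y. y i)"
  using assms unfolding condH_def by (auto dest: sets_eq_imp_space_eq)

lemma condH_nfn: assumes "condH d P" shows "nfn d P x = ennreal (fnorm d P x)"
proof -
  note H = condH_D[OF assms]
  have int: "integrable P (\<lambda>y. \<bar>x 0\<bar> + (\<Sum>i\<in>{1..d}. \<bar>x i\<bar> * \<bar>y i\<bar>))"
  proof -
    interpret prob_space P by (rule H(1))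
    show ?thesis using H(5)
      by (intro Bochner_Integration.integrable_add integrable_const Bochner_Integration.integrable_sum
          Bochner_Integration.integrable_mult_right Bochner_Integration.integrable_abs) auto
  qed
  have "nfn d P x \<le> (\<integral>\<^sup>+y. ennreal (\<bar>x 0\<bar> + (\<Sum>i\<in>{1..d}. \<bar>x i\<bar> * \<bar>y i\<bar>)) \<partial>P)"
    unfolding nfn_def by (intro nn_integral_mono ennreal_leI Gf_bound)
  also have "\<dots> < \<infinity>"
    using int by (subst nn_integral_eq_integral) (auto intro!: add_nonneg_nonneg sum_nonneg)
  finally have "nfn d P x \<noteq> \<infinity>" by simp
  then show ?thesis unfolding fnorm_nfn[OF H(2)] by (simp add: ennreal_enn2real_if)
qed

lemma condH_fnorm_eq: "condH d P \<Longrightarrow> condH d P' \<Longrightarrow> fnorm d P = fnorm d P' \<Longrightarrow> nfn d P = nfn d P'"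
  by (auto simp: fun_eq_iff condH_nfn)

lemma meas_pair_vs: "sets P = sets (vec_space d) \<Longrightarrow> sets Q = sets (vec_space d) \<Longrightarrow>
   f \<in> measurable (vec_space d \<Otimes>\<^sub>M vec_space d) N \<Longrightarrow> f \<in> measurable (P \<Otimes>\<^sub>M Q) N"
  using measurable_cong_sets[OF sets_pair_measure_cong refl] by metis

lemma Gf_pmul_meas: "(\<lambda>p. ennreal (Gf d x (pmul d (fst p) (snd p)))) \<in> borel_measurable (vec_space d \<Otimes>\<^sub>M vec_space d)"
  using measurable_comp[OF pmul_meas Gf_meas] by (simp add: comp_def)

lemma prod_gen_alt: "prod_gen d P Q = distr (P \<Otimes>\<^sub>M Q) (vec_space d) (\<lambda>p. pmul d (fst p) (snd p))"
  unfolding prod_gen_def pmul_def by (simp add: case_prod_beta')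

lemma prod_formula:
  assumes P: "prob_space P" "sets P = sets (vec_space d)" and Q: "prob_space Q" "sets Q = sets (vec_space d)"
  shows "nfn d (prod_gen d P Q) x = (\<integral>\<^sup>+z. \<integral>\<^sup>+y. ennreal (Gf d x (pmul d y z)) \<partial>P \<partial>Q)"
    "nfn d (prod_gen d P Q) x = (\<integral>\<^sup>+y. \<integral>\<^sup>+z. ennreal (Gf d x (pmul d y z)) \<partial>Q \<partial>P)"
proof -
  interpret pair_prob_space P Q using P Q by (simp add: pair_prob_space_def pair_sigma_finite_def prob_space_imp_sigma_finite)
  have m: "(\<lambda>p. pmul d (fst p) (snd p)) \<in> measurable (P \<Otimes>\<^sub>M Q) (vec_space d)"
    by (rule meas_pair_vs[OF P(2) Q(2) pmul_meas])
  have mf: "(\<lambda>p. ennreal (Gf d x (pmul d (fst p) (snd p)))) \<in> borel_measurable (P \<Otimes>\<^sub>M Q)"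
    by (rule meas_pair_vs[OF P(2) Q(2) Gf_pmul_meas])
  have e: "nfn d (prod_gen d P Q) x = (\<integral>\<^sup>+p. ennreal (Gf d x (pmul d (fst p) (snd p))) \<partial>(P \<Otimes>\<^sub>M Q))"
    unfolding nfn_def prod_gen_alt by (subst nn_integral_distr[OF m]) auto
  show "nfn d (prod_gen d P Q) x = (\<integral>\<^sup>+z. \<integral>\<^sup>+y. ennreal (Gf d x (pmul d y z)) \<partial>P \<partial>Q)"
    unfolding e using nn_integral_snd[OF mf] by simp
  show "nfn d (prod_gen d P Q) x = (\<integral>\<^sup>+y. \<integral>\<^sup>+z. ennreal (Gf d x (pmul d y z)) \<partial>Q \<partial>P)"
    unfolding e using M2.nn_integral_fst[OF mf] by simp
qed

definition scl :: "(nat\<Rightarrow>real) \<Rightarrow> (nat\<Rightarrow>real) \<Rightarrow> (nat\<Rightarrow>real)" where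
  "scl x z = (\<lambda>i. if i = 0 then x 0 else x i * z i)"

lemma Gf_pmul_scl1: assumes "\<forall>i\<in>{1..d}. 0 \<le> z i"
  shows "Gf d x (pmul d y z) = Gf d (scl x z) y"
  unfolding Gf_def pmul_def scl_def using assms
  by (auto intro!: arg_cong[where f=Max] arg_cong[where f="insert _"] image_cong simp: abs_mult)

lemma Gf_pmul_scl2: assumes "\<forall>i\<in>{1..d}. 0 \<le> y i"
  shows "Gf d x (pmul d y z) = Gf d (scl x y) z"
  unfolding Gf_def pmul_def scl_def using assms
  by (auto intro!: arg_cong[where f=Max] arg_cong[where f="insert _"] image_cong simp: abs_mult)

lemma condH_AE_nonneg: "condH d P \<Longrightarrow> AE z in P. \<forall>i\<in>{1..d}. 0 \<le> z i"
  by (intro AE_finite_allI) (auto dest: condH_D)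

lemma inner1: assumes "condH d P" "condH d Q"
  shows "nfn d (prod_gen d P Q) x = (\<integral>\<^sup>+z. nfn d P (scl x z) \<partial>Q)"
  apply (subst prod_formula(1)[OF condH_D(1,2)[OF assms(1)] condH_D(1,2)[OF assms(2)]])
  unfolding nfn_def
  apply (rule nn_integral_cong_AE)
  using condH_AE_nonneg[OF assms(2)] by eventually_elim (simp add: Gf_pmul_scl1)

lemma inner2: assumes "condH d P" "condH d Q"
  shows "nfn d (prod_gen d P Q) x = (\<integral>\<^sup>+y. nfn d Q (scl x y) \<partial>P)"
  apply (subst prod_formula(2)[OF condH_D(1,2)[OF assms(1)] condH_D(1,2)[OF assms(2)]])
  unfolding nfn_def
  apply (rule nn_integral_cong_AE)
  using condH_AE_nonneg[OF assms(1)] by eventually_elim (simp add: Gf_pmul_scl2)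

lemma wd_nfn: assumes "condH d P" "condH d P'" "condH d Q" "condH d Q'"
  "nfn d P = nfn d P'" "nfn d Q = nfn d Q'"
  shows "nfn d (prod_gen d P Q) = nfn d (prod_gen d P' Q')"
proof
  fix x
  have "nfn d (prod_gen d P Q) x = nfn d (prod_gen d P' Q) x"
    using assms by (simp add: inner1)
  also have "\<dots> = nfn d (prod_gen d P' Q') x"
    using assms by (simp add: inner2)
  finally show "nfn d (prod_gen d P Q) x = nfn d (prod_gen d P' Q') x" .
qed

lemma prod_nn:
  assumes P: "prob_space P" "sets P = sets (vec_space d)" and Q: "prob_space Q" "sets Q = sets (vec_space d)"
    and f: "f \<in> borel_measurable (vec_space d)"
  shows "(\<integral>\<^sup>+w. f w \<partial>prod_gen d P Q) = (\<integral>\<^sup>+z. \<integral>\<^sup>+y. f (pmul d y z) \<partial>P \<partial>Q)"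
proof -
  interpret pair_prob_space P Q using P Q by (simp add: pair_prob_space_def pair_sigma_finite_def prob_space_imp_sigma_finite)
  have m: "(\<lambda>p. pmul d (fst p) (snd p)) \<in> measurable (P \<Otimes>\<^sub>M Q) (vec_space d)"
    by (rule meas_pair_vs[OF P(2) Q(2) pmul_meas])
  have mf: "(\<lambda>p. f (pmul d (fst p) (snd p))) \<in> borel_measurable (P \<Otimes>\<^sub>M Q)"
    using measurable_comp[OF m f] by (simp add: comp_def)
  have e: "(\<integral>\<^sup>+w. f w \<partial>prod_gen d P Q) = (\<integral>\<^sup>+p. f (pmul d (fst p) (snd p)) \<partial>(P \<Otimes>\<^sub>M Q))"
    unfolding prod_gen_alt by (subst nn_integral_distr[OF m]) (auto simp: f)
  show ?thesis
    unfolding e using nn_integral_snd[OF mf] by simp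
qed

lemma coord_nn: "condH d P \<Longrightarrow> i \<in> {1..d} \<Longrightarrow> (\<integral>\<^sup>+y. ennreal (y i) \<partial>P) = ennreal (\<integral>y. y i \<partial>P)"
  by (rule nn_integral_eq_integral) (auto dest: condH_D)

lemma coord_meas[measurable]: "i \<in> {1..d} \<Longrightarrow> (\<lambda>w. w i) \<in> borel_measurable (vec_space d)"
  unfolding vec_space_def by simp

lemma condH_prod: assumes P: "condH d P" and Q: "condH d Q" shows "condH d (prod_gen d P Q)"
proof -
  note HP = condH_D[OF P] and HQ = condH_D[OF Q]
  interpret pair_prob_space P Q using HP HQ by (simp add: pair_prob_space_def pair_sigma_finite_def prob_space_imp_sigma_finite)
  have m: "(\<lambda>p. pmul d (fst p) (snd p)) \<in> measurable (P \<Otimes>\<^sub>M Q) (vec_space d)"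
    by (rule meas_pair_vs[OF HP(2) HQ(2) pmul_meas])
  have ps: "prob_space (prod_gen d P Q)"
    unfolding prod_gen_alt by (rule P.prob_space_distr[OF m])
  have st: "sets (prod_gen d P Q) = sets (vec_space d)"
    unfolding prod_gen_alt by simp
  have mi: "(\<lambda>w. w i) \<in> borel_measurable (prod_gen d P Q)" if "i \<in> {1..d}" for i
    using meas_cong_vs[OF st coord_meas[OF that]] .
  have ae: "AE w in prod_gen d P Q. 0 \<le> w i" if i: "i \<in> {1..d}" for i
  proof -
    interpret pg: prob_space "prod_gen d P Q" by (rule ps)
    have "(\<integral>\<^sup>+w. ennreal (- w i) \<partial>prod_gen d P Q) = (\<integral>\<^sup>+z. \<integral>\<^sup>+y. ennreal (- pmul d y z i) \<partial>P \<partial>Q)"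
      using i by (intro prod_nn HP(1,2) HQ(1,2)) measurable
    also have "\<dots> = (\<integral>\<^sup>+z. \<integral>\<^sup>+y. 0 \<partial>P \<partial>Q)"
    proof (rule nn_integral_cong_AE)
      show "AE z in Q. (\<integral>\<^sup>+y. ennreal (- pmul d y z i) \<partial>P) = (\<integral>\<^sup>+y. 0 \<partial>P)"
        using HQ(4)[OF i]
      proof eventually_elim
        case (elim z)
        show ?case
        proof (rule nn_integral_cong_AE)
          show "AE y in P. ennreal (- pmul d y z i) = 0"
            using HP(4)[OF i] by eventually_elim (use elim i in \<open>simp add: pmul_def ennreal_eq_0_iff\<close>)
        qed
      qed
    qed
    finally have "(\<integral>\<^sup>+w. ennreal (- w i) \<partial>prod_gen d P Q) = 0" by simp
    then have "AE w in prod_gen d P Q. ennreal (- w i) = 0"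
      using i mi[OF i] by (subst (asm) nn_integral_0_iff_AE) auto
    then show ?thesis by eventually_elim (simp add: ennreal_eq_0_iff)
  qed
  have nn: "(\<integral>\<^sup>+w. ennreal (w i) \<partial>prod_gen d P Q) = ennreal ((\<integral>y. y i \<partial>P) * (\<integral>z. z i \<partial>Q))"
    if i: "i \<in> {1..d}" for i
  proof -
    have "(\<integral>\<^sup>+w. ennreal (w i) \<partial>prod_gen d P Q) = (\<integral>\<^sup>+z. \<integral>\<^sup>+y. ennreal (pmul d y z i) \<partial>P \<partial>Q)"
      using i by (intro prod_nn HP(1,2) HQ(1,2)) measurable
    also have "\<dots> = (\<integral>\<^sup>+z. (\<integral>\<^sup>+y. ennreal (y i) \<partial>P) * ennreal (z i) \<partial>Q)"
    proof (rule nn_integral_cong_AE)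
      show "AE z in Q. (\<integral>\<^sup>+y. ennreal (pmul d y z i) \<partial>P) = (\<integral>\<^sup>+y. ennreal (y i) \<partial>P) * ennreal (z i)"
        using HQ(4)[OF i]
      proof eventually_elim
        case (elim z)
        have "(\<integral>\<^sup>+y. ennreal (pmul d y z i) \<partial>P) = (\<integral>\<^sup>+y. ennreal (y i) * ennreal (z i) \<partial>P)"
        proof (rule nn_integral_cong_AE)
          show "AE y in P. ennreal (pmul d y z i) = ennreal (y i) * ennreal (z i)"
            using HP(4)[OF i] by eventually_elim (use elim i in \<open>simp add: pmul_def ennreal_mult\<close>)
        qed
        also have "\<dots> = (\<integral>\<^sup>+y. ennreal (y i) \<partial>P) * ennreal (z i)"
          by (rule nn_integral_multc) (use i HP(2) in \<open>auto intro: meas_cong_vs\<close>)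
        finally show ?case .
      qed
    qed
    also have "\<dots> = (\<integral>\<^sup>+y. ennreal (y i) \<partial>P) * (\<integral>\<^sup>+z. ennreal (z i) \<partial>Q)"
      by (rule nn_integral_cmult) (use i HQ(2) in \<open>auto intro: meas_cong_vs\<close>)
    also have "\<dots> = ennreal ((\<integral>y. y i \<partial>P) * (\<integral>z. z i \<partial>Q))"
      using i by (simp add: coord_nn[OF P] coord_nn[OF Q] ennreal_mult HP(6) HQ(6) less_imp_le)
    finally show ?thesis .
  qed
  have int: "integrable (prod_gen d P Q) (\<lambda>w. w i)" if i: "i \<in> {1..d}" for i
    using nn[OF i] by (intro integrableI_nonneg mi[OF i] ae[OF i]) auto
  have pos: "0 < (\<integral>w. w i \<partial>prod_gen d P Q)" if i: "i \<in> {1..d}" for i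
  proof -
    have "(\<integral>w. w i \<partial>prod_gen d P Q) = enn2real (\<integral>\<^sup>+w. ennreal (w i) \<partial>prod_gen d P Q)"
      by (rule integral_eq_nn_integral[OF mi[OF i] ae[OF i]])
    also have "\<dots> = (\<integral>y. y i \<partial>P) * (\<integral>z. z i \<partial>Q)"
      using nn[OF i] HP(6)[OF i] HQ(6)[OF i] by simp
    finally show ?thesis using HP(6)[OF i] HQ(6)[OF i] by simp
  qed
  show ?thesis unfolding condH_def using ps st ae int pos by blast
qed

lemma pmul_comm: "pmul d y z = pmul d z y"
  by (simp add: pmul_def mult.commute)

lemma pmul_assoc: "pmul d (pmul d y z) u = pmul d y (pmul d z u)"
  by (auto simp: pmul_def mult.assoc fun_eq_iff)

lemma nfn_comm: assumes "condH d P" "condH d Q" shows "nfn d (prod_gen d P Q) = nfn d (prod_gen d Q P)"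
proof
  fix x
  note HP = condH_D[OF assms(1)] and HQ = condH_D[OF assms(2)]
  show "nfn d (prod_gen d P Q) x = nfn d (prod_gen d Q P) x"
    unfolding prod_formula(1)[OF HP(1,2) HQ(1,2)] prod_formula(2)[OF HQ(1,2) HP(1,2)]
    by (simp add: pmul_comm)
qed

lemma pmul_meas1[measurable]: "(\<lambda>w. pmul d w u) \<in> measurable (vec_space d) (vec_space d)"
  unfolding pmul_def vec_space_def by measurable

lemma pmul_meas_sw: "(\<lambda>p. pmul d (snd p) (fst p)) \<in> measurable (vec_space d \<Otimes>\<^sub>M vec_space d) (vec_space d)"
  unfolding pmul_def vec_space_def by measurable

lemma nfn_assoc: assumes "condH d P" "condH d Q" "condH d R"
  shows "nfn d (prod_gen d (prod_gen d P Q) R) = nfn d (prod_gen d P (prod_gen d Q R))"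
proof
  fix x
  note HP = condH_D[OF assms(1)] and HQ = condH_D[OF assms(2)] and HR = condH_D[OF assms(3)]
  note HPQ = condH_D[OF condH_prod[OF assms(1,2)]] and HQR = condH_D[OF condH_prod[OF assms(2,3)]]
  interpret P: prob_space P by (rule HP(1))
  have "nfn d (prod_gen d (prod_gen d P Q) R) x =
      (\<integral>\<^sup>+u. \<integral>\<^sup>+w. ennreal (Gf d x (pmul d w u)) \<partial>prod_gen d P Q \<partial>R)"
    by (rule prod_formula(1)[OF HPQ(1,2) HR(1,2)])
  also have "\<dots> = (\<integral>\<^sup>+u. \<integral>\<^sup>+z. \<integral>\<^sup>+y. ennreal (Gf d x (pmul d (pmul d y z) u)) \<partial>P \<partial>Q \<partial>R)"
  proof (rule nn_integral_cong)
    fix u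
    have "(\<lambda>w. ennreal (Gf d x (pmul d w u))) \<in> borel_measurable (vec_space d)"
      using measurable_comp[OF pmul_meas1 Gf_meas] by (simp add: comp_def)
    then show "(\<integral>\<^sup>+w. ennreal (Gf d x (pmul d w u)) \<partial>prod_gen d P Q) =
      (\<integral>\<^sup>+z. \<integral>\<^sup>+y. ennreal (Gf d x (pmul d (pmul d y z) u)) \<partial>P \<partial>Q)"
      by (rule prod_nn[OF HP(1,2) HQ(1,2)])
  qed
  also have "\<dots> = (\<integral>\<^sup>+w. \<integral>\<^sup>+y. ennreal (Gf d x (pmul d y w)) \<partial>P \<partial>prod_gen d Q R)"
  proof -
    have m: "(\<lambda>p. ennreal (Gf d x (pmul d (snd p) (fst p)))) \<in> borel_measurable (vec_space d \<Otimes>\<^sub>M P)"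
    proof -
      have "(\<lambda>p. ennreal (Gf d x (pmul d (snd p) (fst p)))) \<in> borel_measurable (vec_space d \<Otimes>\<^sub>M vec_space d)"
        using measurable_comp[OF pmul_meas_sw Gf_meas] by (simp add: comp_def)
      then show ?thesis
        using measurable_cong_sets[OF sets_pair_measure_cong[OF refl HP(2)] refl] by metis
    qed
    have "(\<lambda>w. \<integral>\<^sup>+y. ennreal (Gf d x (pmul d y w)) \<partial>P) \<in> borel_measurable (vec_space d)"
      by (rule P.borel_measurable_nn_integral) (use m in \<open>simp add: case_prod_beta'\<close>)
    from prod_nn[OF HQ(1,2) HR(1,2) this] show ?thesis by (simp add: pmul_assoc)
  qed
  also have "\<dots> = nfn d (prod_gen d P (prod_gen d Q R)) x"
    by (rule prod_formula(1)[OF HP(1,2) HQR(1,2), symmetric])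
  finally show "nfn d (prod_gen d (prod_gen d P Q) R) x = nfn d (prod_gen d P (prod_gen d Q R)) x" .
qed

lemma restrict_space_vs: "restrict c {1..d} \<in> space (vec_space d)"
  unfolding vec_space_def by (simp add: space_PiM)

lemma condH_const: assumes "\<forall>i\<in>{1..d}. 0 < c i" shows "condH d (const_gen d c)"
proof -
  have ps: "prob_space (const_gen d c)" unfolding const_gen_def
    by (rule prob_space_return[OF restrict_space_vs])
  have st: "sets (const_gen d c) = sets (vec_space d)" unfolding const_gen_def by simp
  have "(AE y in const_gen d c. 0 \<le> y i) \<and> integrable (const_gen d c) (\<lambda>y. y i) \<and> 0 < integral\<^sup>L (const_gen d c) (\<lambda>y. y i)"
    if i: "i \<in> {1..d}" for i
  proof (intro conjI)
    have m: "(\<lambda>y. y i) \<in> borel_measurable (vec_space d)" using i by simp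
    have pr: "Measurable.pred (vec_space d) (\<lambda>y. 0 \<le> y i)" using m by measurable
    show "AE y in const_gen d c. 0 \<le> y i"
      unfolding const_gen_def using AE_return[OF restrict_space_vs pr] i assms by fastforce
    have "(\<integral>\<^sup>+y. ennreal (norm (y i)) \<partial>const_gen d c) = ennreal (norm (c i))"
      unfolding const_gen_def using i m
      by (subst nn_integral_return[OF restrict_space_vs]) auto
    then show "integrable (const_gen d c) (\<lambda>y. y i)"
      using m st by (intro integrableI_bounded) (auto intro: meas_cong_vs)
    show "0 < integral\<^sup>L (const_gen d c) (\<lambda>y. y i)"
      unfolding const_gen_def using i m assms
      by (subst integral_return[OF restrict_space_vs]) auto
  qed
  then show ?thesis unfolding condH_def using ps st by blast
qed

lemma nfn_const: "nfn d (const_gen d c) x = ennreal (Gf d x c)"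
  unfolding nfn_def const_gen_def
  by (subst nn_integral_return[OF restrict_space_vs]) (auto intro!: arg_cong[where f=ennreal] Gf_cong)

lemma fnorm_const: "fnorm d (const_gen d c) x = Gf d x c"
proof -
  have "sets (const_gen d c) = sets (vec_space d)" unfolding const_gen_def by simp
  then show ?thesis by (simp add: fnorm_nfn nfn_const Gf_nonneg)
qed

lemma sup_norm_const: "sup_norm d = fnorm d (const_gen d (\<lambda>_. 1))"
proof
  fix x
  have "{0..d} = insert 0 {1..d}" by auto
  then show "sup_norm d x = fnorm d (const_gen d (\<lambda>_. 1)) x"
    unfolding fnorm_const Gf_def sup_norm_def by simp
qed

lemma nfn_prod_const_left: assumes "condH d Q"
  shows "nfn d (prod_gen d (const_gen d c) Q) x = (\<integral>\<^sup>+z. ennreal (Gf d x (pmul d c z)) \<partial>Q)"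
proof -
  have H: "prob_space (const_gen d c)" "sets (const_gen d c) = sets (vec_space d)"
    unfolding const_gen_def by (rule prob_space_return[OF restrict_space_vs]) simp
  note HQ = condH_D[OF assms]
  show ?thesis
    unfolding prod_formula(1)[OF H HQ(1,2)]
  proof (rule nn_integral_cong)
    fix z
    have "(\<lambda>y. ennreal (Gf d x (pmul d y z))) \<in> borel_measurable (vec_space d)"
      using measurable_comp[OF pmul_meas1 Gf_meas] by (simp add: comp_def)
    then show "(\<integral>\<^sup>+y. ennreal (Gf d x (pmul d y z)) \<partial>const_gen d c) = ennreal (Gf d x (pmul d c z))"
      unfolding const_gen_def
      by (subst nn_integral_return[OF restrict_space_vs]) (auto intro!: arg_cong[where f=ennreal] Gf_cong simp: pmul_def)
  qed
qed

lemma nfn_one_left: assumes "condH d Q"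
  shows "nfn d (prod_gen d (const_gen d (\<lambda>_. 1)) Q) = nfn d Q"
proof
  fix x
  show "nfn d (prod_gen d (const_gen d (\<lambda>_. 1)) Q) x = nfn d Q x"
    apply (subst nfn_prod_const_left[OF assms]) unfolding nfn_def
    by (rule nn_integral_cong) (auto intro!: arg_cong[where f=ennreal] Gf_cong simp: pmul_def)
qed

lemma nfn_const_inv: assumes "\<forall>i\<in>{1..d}. 0 < c i"
  shows "nfn d (prod_gen d (const_gen d c) (const_gen d (\<lambda>i. 1 / c i))) = nfn d (const_gen d (\<lambda>_. 1))"
proof
  fix x
  have e: "Gf d x (pmul d c (restrict (\<lambda>i. 1 / c i) {1..d})) = Gf d x (\<lambda>_. 1)"
  proof (rule Gf_cong)
    fix i assume i: "i \<in> {1..d}"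
    then have "c i > 0" using assms by auto
    then show "pmul d c (restrict (\<lambda>i. 1 / c i) {1..d}) i = 1" using i by (simp add: pmul_def)
  qed
  have "(\<lambda>z. ennreal (Gf d x (pmul d z c))) \<in> borel_measurable (vec_space d)"
    using measurable_comp[OF pmul_meas1 Gf_meas] by (simp add: comp_def)
  then have m: "(\<lambda>z. ennreal (Gf d x (pmul d c z))) \<in> borel_measurable (vec_space d)"
    by (simp add: pmul_comm)
  have ci: "\<forall>i\<in>{1..d}. 0 < 1 / c i" using assms by auto
  show "nfn d (prod_gen d (const_gen d c) (const_gen d (\<lambda>i. 1 / c i))) x = nfn d (const_gen d (\<lambda>_. 1)) x"
    apply (subst nfn_prod_const_left[OF condH_const[OF ci]])
    apply (subst nfn_const)
    unfolding const_gen_def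
    apply (subst nn_integral_return[OF restrict_space_vs m])
    using e by simp
qed

lemma ennreal_split1: "0 \<le> a \<Longrightarrow> 0 \<le> b \<Longrightarrow> ennreal (a + b) = ennreal a + ennreal b"
  by (rule ennreal_plus)

lemma ennreal_1_add_eq: "(1::ennreal) = 1 + A \<Longrightarrow> A = 0"
  using ennreal_add_left_cancel[of 1 A 0] by simp

lemma ae_one:
  assumes W: "prob_space W" and f: "f \<in> borel_measurable W"
    and h0: "(\<integral>\<^sup>+w. ennreal (max 0 (f w)) \<partial>W) = 1"
    and h1: "(\<integral>\<^sup>+w. ennreal (max 1 (f w)) \<partial>W) = 1"
  shows "AE w in W. f w = 1"
proof -
  interpret prob_space W by (rule W)
  have "(\<integral>\<^sup>+w. ennreal (max 1 (f w)) \<partial>W) = (\<integral>\<^sup>+w. 1 + ennreal (max 1 (f w) - 1) \<partial>W)"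
  proof (intro nn_integral_cong)
    fix w
    have "ennreal (max 1 (f w)) = ennreal (1 + (max 1 (f w) - 1))" by (rule arg_cong[where f=ennreal]) simp
    also have "\<dots> = 1 + ennreal (max 1 (f w) - 1)" by (subst ennreal_split1) auto
    finally show "ennreal (max 1 (f w)) = 1 + ennreal (max 1 (f w) - 1)" .
  qed
  also have "\<dots> = 1 + (\<integral>\<^sup>+w. ennreal (max 1 (f w) - 1) \<partial>W)"
    using f by (subst nn_integral_add) (auto simp: emeasure_space_1)
  finally have "(\<integral>\<^sup>+w. ennreal (max 1 (f w) - 1) \<partial>W) = 0"
    using h1 by (intro ennreal_1_add_eq) simp
  then have "AE w in W. ennreal (max 1 (f w) - 1) = 0"
    using f by (subst (asm) nn_integral_0_iff_AE) auto
  then have le: "AE w in W. f w \<le> 1"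
    by eventually_elim (simp add: ennreal_eq_0_iff)
  have "1 = (\<integral>\<^sup>+w. 1 \<partial>W)" by (simp add: emeasure_space_1)
  also have "\<dots> = (\<integral>\<^sup>+w. ennreal (max 0 (f w)) + ennreal (1 - max 0 (f w)) \<partial>W)"
  proof (intro nn_integral_cong_AE)
    show "AE w in W. 1 = ennreal (max 0 (f w)) + ennreal (1 - max 0 (f w))"
      using le
    proof eventually_elim
      case (elim w)
      have "max 0 (f w) + (1 - max 0 (f w)) = (1::real)" by simp
      then have "(1::ennreal) = ennreal (max 0 (f w) + (1 - max 0 (f w)))" by (metis ennreal_1)
      also have "\<dots> = ennreal (max 0 (f w)) + ennreal (1 - max 0 (f w))"
        using elim by (subst ennreal_split1) auto
      finally show ?case .
    qed
  qed
  also have "\<dots> = 1 + (\<integral>\<^sup>+w. ennreal (1 - max 0 (f w)) \<partial>W)"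
    using f h0 by (subst nn_integral_add) auto
  finally have "(\<integral>\<^sup>+w. ennreal (1 - max 0 (f w)) \<partial>W) = 0"
    by (rule ennreal_1_add_eq)
  then have "AE w in W. ennreal (1 - max 0 (f w)) = 0"
    using f by (subst (asm) nn_integral_0_iff_AE) auto
  then have ge: "AE w in W. 1 \<le> f w"
    by eventually_elim (simp add: ennreal_eq_0_iff)
  from le ge show ?thesis by eventually_elim simp
qed


definition e1 :: "nat \<Rightarrow> nat \<Rightarrow> real" where "e1 i = (\<lambda>j. if j = i then 1 else 0)"
definition e01 :: "nat \<Rightarrow> nat \<Rightarrow> real" where "e01 i = (\<lambda>j. if j = 0 \<or> j = i then 1 else 0)"

lemma Gf_e1: assumes i: "i \<in> {1..d}" shows "Gf d (e1 i) w = max 0 (w i)"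
proof -
  have "Max (insert \<bar>e1 i 0\<bar> ((\<lambda>j. \<bar>e1 i j\<bar> * w j) ` {1..d})) = max 0 (w i)"
  proof (rule Max_eqI)
    show "max 0 (w i) \<in> insert \<bar>e1 i 0\<bar> ((\<lambda>j. \<bar>e1 i j\<bar> * w j) ` {1..d})"
      using i by (cases "0 \<le> w i") (auto simp: e1_def max_def intro!: image_eqI[where x=i])
  qed (use i in \<open>auto simp: e1_def\<close>)
  then show ?thesis unfolding Gf_def .
qed

lemma Gf_e01: assumes i: "i \<in> {1..d}" shows "Gf d (e01 i) w = max 1 (w i)"
proof -
  have "Max (insert \<bar>e01 i 0\<bar> ((\<lambda>j. \<bar>e01 i j\<bar> * w j) ` {1..d})) = max 1 (w i)"
  proof (rule Max_eqI)
    show "max 1 (w i) \<in> insert \<bar>e01 i 0\<bar> ((\<lambda>j. \<bar>e01 i j\<bar> * w j) ` {1..d})"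
      using i by (cases "1 \<le> w i") (auto simp: e01_def max_def intro!: image_eqI[where x=i])
  qed (use i in \<open>auto simp: e01_def\<close>)
  then show ?thesis unfolding Gf_def .
qed

lemma ae_const_coord:
  assumes P: "condH d P" and Q: "condH d Q" and E: "nfn d (prod_gen d P Q) = nfn d (const_gen d (\<lambda>_. 1))"
    and i: "i \<in> {1..d}"
  shows "\<exists>ci. AE y in P. y i = ci"
proof -
  note HP = condH_D[OF P] and HQ = condH_D[OF Q]
  note HW = condH_D[OF condH_prod[OF P Q]]
  interpret pair_prob_space P Q using HP HQ by (simp add: pair_prob_space_def pair_sigma_finite_def prob_space_imp_sigma_finite)
  have fm: "(\<lambda>w. w i) \<in> borel_measurable (prod_gen d P Q)"
    using meas_cong_vs[OF HW(2) coord_meas[OF i]] .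
  have h0: "(\<integral>\<^sup>+w. ennreal (max 0 (w i)) \<partial>prod_gen d P Q) = 1"
  proof -
    have "(\<integral>\<^sup>+w. ennreal (max 0 (w i)) \<partial>prod_gen d P Q) = nfn d (prod_gen d P Q) (e1 i)"
      unfolding nfn_def using i by (simp add: Gf_e1)
    also have "\<dots> = 1" unfolding E nfn_const using i by (simp add: Gf_e1)
    finally show ?thesis .
  qed
  have h1: "(\<integral>\<^sup>+w. ennreal (max 1 (w i)) \<partial>prod_gen d P Q) = 1"
  proof -
    have "(\<integral>\<^sup>+w. ennreal (max 1 (w i)) \<partial>prod_gen d P Q) = nfn d (prod_gen d P Q) (e01 i)"
      unfolding nfn_def using i by (simp add: Gf_e01)
    also have "\<dots> = 1" unfolding E nfn_const using i by (simp add: Gf_e01)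
    finally show ?thesis .
  qed
  have "AE w in prod_gen d P Q. w i = 1"
    by (rule ae_one[OF HW(1) fm h0 h1])
  then have "AE p in P \<Otimes>\<^sub>M Q. pmul d (fst p) (snd p) i = 1"
    unfolding prod_gen_alt
    using i by (subst (asm) AE_distr_iff) (auto intro: meas_pair_vs[OF HP(2) HQ(2) pmul_meas])
  then have ae2: "AE p in P \<Otimes>\<^sub>M Q. fst p i * snd p i = 1"
    using i by (simp add: pmul_def)
  have sm: "{p \<in> space (P \<Otimes>\<^sub>M Q). fst p i * snd p i = 1} \<in> sets (P \<Otimes>\<^sub>M Q)"
  proof -
    have "(\<lambda>p. fst p i * snd p i) \<in> borel_measurable (vec_space d \<Otimes>\<^sub>M vec_space d)"
      using i unfolding vec_space_def by measurable
    then have "(\<lambda>p. fst p i * snd p i) \<in> borel_measurable (P \<Otimes>\<^sub>M Q)"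
      by (rule meas_pair_vs[OF HP(2) HQ(2)])
    then show ?thesis by measurable
  qed
  have "AE y in P. AE z in Q. y i * z i = 1"
    using AE_pair[OF ae2] by simp
  then have "AE z in Q. AE y in P. y i * z i = 1"
    using AE_commute[of "\<lambda>y z. y i * z i = 1"] sm by simp
  then obtain z0 where z0: "AE y in P. y i * z0 i = 1"
  proof -
    assume r: "\<And>z0. AE y in P. y i * z0 i = 1 \<Longrightarrow> thesis"
    show thesis
    proof (rule ccontr)
      assume "\<not> thesis"
      then have "\<And>z. \<not> (AE y in P. y i * z i = 1)" using r by blast
      with \<open>AE z in Q. AE y in P. y i * z i = 1\<close> have "AE z in Q. False"
        by (auto elim: eventually_mono)
      then show False using M2.AE_False by simp
    qed
  qed
  have "AE y in P. y i = 1 / z0 i"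
    using z0 by eventually_elim (metis nonzero_eq_divide_eq mult_zero_right zero_neq_one)
  then show ?thesis by blast
qed

lemma unit_const:
  assumes P: "condH d P" and Q: "condH d Q" and E: "nfn d (prod_gen d P Q) = nfn d (const_gen d (\<lambda>_. 1))"
  shows "\<exists>c. (\<forall>i\<in>{1..d}. 0 < c i) \<and> fnorm d P = fnorm d (const_gen d c)"
proof -
  note HP = condH_D[OF P]
  interpret prob_space P by (rule HP(1))
  have "\<forall>i\<in>{1..d}. \<exists>ci. AE y in P. y i = ci"
    using ae_const_coord[OF P Q E] by blast
  then obtain c where c: "\<And>i. i \<in> {1..d} \<Longrightarrow> AE y in P. y i = c i"
    by metis
  have pos: "\<forall>i\<in>{1..d}. 0 < c i"
  proof
    fix i assume i: "i \<in> {1..d}"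
    have "(\<integral>y. y i \<partial>P) = (\<integral>y. c i \<partial>P)"
      using c[OF i] i by (intro integral_cong_AE) (auto intro: meas_cong_vs[OF HP(2)])
    then show "0 < c i" using HP(6)[OF i] by (simp add: prob_space)
  qed
  have all: "AE y in P. \<forall>i\<in>{1..d}. y i = c i"
    using c by (intro AE_finite_allI) auto
  have "fnorm d P x = fnorm d (const_gen d c) x" for x
  proof -
    have "fnorm d P x = (\<integral>y. Gf d x y \<partial>P)" unfolding fnorm_def Gf_def ..
    also have "\<dots> = (\<integral>y. Gf d x c \<partial>P)"
    proof (rule integral_cong_AE)
      show "AE y in P. Gf d x y = Gf d x c" using all by eventually_elim (auto intro: Gf_cong)
    qed (auto intro: meas_cong_vs[OF HP(2)])
    also have "\<dots> = fnorm d (const_gen d c) x" by (simp add: fnorm_const prob_space)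
    finally show ?thesis .
  qed
  then show ?thesis using pos by blast
qed


lemma fnorm_eq_nfn: assumes "condH d P" "condH d P'" "nfn d P = nfn d P'" shows "fnorm d P = fnorm d P'"
  using assms by (auto simp: fun_eq_iff fnorm_nfn dest!: condH_D(2))

lemma fmult_eq: assumes P: "condH d P" and Q: "condH d Q"
  shows "fmult d (fnorm d P) (fnorm d Q) = fnorm d (prod_gen d P Q)"
proof -
  define P0 where "P0 = (SOME P0. condH d P0 \<and> fnorm d P0 = fnorm d P)"
  define Q0 where "Q0 = (SOME Q0. condH d Q0 \<and> fnorm d Q0 = fnorm d Q)"
  have P0: "condH d P0 \<and> fnorm d P0 = fnorm d P"
    unfolding P0_def by (rule someI_ex) (use P in blast)
  have Q0: "condH d Q0 \<and> fnorm d Q0 = fnorm d Q"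
    unfolding Q0_def by (rule someI_ex) (use Q in blast)
  have "nfn d (prod_gen d P0 Q0) = nfn d (prod_gen d P Q)"
    using P0 Q0 P Q by (intro wd_nfn condH_fnorm_eq) auto
  then have "fnorm d (prod_gen d P0 Q0) = fnorm d (prod_gen d P Q)"
    using P0 Q0 P Q by (intro fnorm_eq_nfn condH_prod) auto
  then show ?thesis unfolding fmult_def P0_def[symmetric] Q0_def[symmetric] .
qed

lemma mem_fnorms: "N \<in> fnorms d \<longleftrightarrow> (\<exists>P. condH d P \<and> N = fnorm d P)"
  unfolding fnorms_def by blast

lemma one_gen: "sup_norm d = fnorm d (const_gen d (\<lambda>_. 1))" and one_condH: "condH d (const_gen d (\<lambda>_. 1))"
  by (rule sup_norm_const) (rule condH_const, simp)

theorem proposition4p4: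
  fixes d :: nat
  assumes "1 \<le> d"
  shows "(\<forall>P P' Q Q'. condH d P \<and> condH d P' \<and> condH d Q \<and> condH d Q' \<and>
            fnorm d P = fnorm d P' \<and> fnorm d Q = fnorm d Q' \<longrightarrow>
            fnorm d (prod_gen d P Q) = fnorm d (prod_gen d P' Q'))
       \<and> comm_monoid (fnorm_monoid d)
       \<and> Units (fnorm_monoid d) =
           {fnorm d (const_gen d c) | c. \<forall>i\<in>{1..d}. 0 < c i}"
proof (intro conjI allI impI)
  fix P P' Q Q'
  assume h: "condH d P \<and> condH d P' \<and> condH d Q \<and> condH d Q' \<and> fnorm d P = fnorm d P' \<and> fnorm d Q = fnorm d Q'"
  then have "nfn d (prod_gen d P Q) = nfn d (prod_gen d P' Q')"
    by (intro wd_nfn condH_fnorm_eq) auto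
  then show "fnorm d (prod_gen d P Q) = fnorm d (prod_gen d P' Q')"
    using h by (intro fnorm_eq_nfn condH_prod) auto
next
  show "comm_monoid (fnorm_monoid d)"
  proof (rule comm_monoidI)
    fix x y assume "x \<in> carrier (fnorm_monoid d)" "y \<in> carrier (fnorm_monoid d)"
    then obtain P Q where PQ: "condH d P" "condH d Q" "x = fnorm d P" "y = fnorm d Q"
      by (auto simp: fnorm_monoid_def mem_fnorms)
    show "x \<otimes>\<^bsub>fnorm_monoid d\<^esub> y \<in> carrier (fnorm_monoid d)"
      using PQ by (auto simp: fnorm_monoid_def fmult_eq mem_fnorms intro: condH_prod)
    show "x \<otimes>\<^bsub>fnorm_monoid d\<^esub> y = y \<otimes>\<^bsub>fnorm_monoid d\<^esub> x"
      using PQ by (auto simp: fnorm_monoid_def fmult_eq intro!: fnorm_eq_nfn condH_prod nfn_comm)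
  next
    show "\<one>\<^bsub>fnorm_monoid d\<^esub> \<in> carrier (fnorm_monoid d)"
      using one_condH by (auto simp: fnorm_monoid_def one_gen mem_fnorms)
  next
    fix x y z assume "x \<in> carrier (fnorm_monoid d)" "y \<in> carrier (fnorm_monoid d)" "z \<in> carrier (fnorm_monoid d)"
    then obtain P Q R where PQ: "condH d P" "condH d Q" "condH d R" "x = fnorm d P" "y = fnorm d Q" "z = fnorm d R"
      by (auto simp: fnorm_monoid_def mem_fnorms)
    show "x \<otimes>\<^bsub>fnorm_monoid d\<^esub> y \<otimes>\<^bsub>fnorm_monoid d\<^esub> z = x \<otimes>\<^bsub>fnorm_monoid d\<^esub> (y \<otimes>\<^bsub>fnorm_monoid d\<^esub> z)"
      using PQ by (auto simp: fnorm_monoid_def fmult_eq condH_prod intro!: fnorm_eq_nfn condH_prod nfn_assoc)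
  next
    fix x assume "x \<in> carrier (fnorm_monoid d)"
    then obtain Q where Q: "condH d Q" "x = fnorm d Q"
      by (auto simp: fnorm_monoid_def mem_fnorms)
    show "\<one>\<^bsub>fnorm_monoid d\<^esub> \<otimes>\<^bsub>fnorm_monoid d\<^esub> x = x"
      using Q one_condH by (auto simp: fnorm_monoid_def fmult_eq one_gen intro!: fnorm_eq_nfn condH_prod nfn_one_left)
  qed
next
  show "Units (fnorm_monoid d) = {fnorm d (const_gen d c) | c. \<forall>i\<in>{1..d}. 0 < c i}"
  proof
    show "Units (fnorm_monoid d) \<subseteq> {fnorm d (const_gen d c) | c. \<forall>i\<in>{1..d}. 0 < c i}"
    proof
      fix y assume "y \<in> Units (fnorm_monoid d)"
      then obtain x where y: "y \<in> fnorms d" and x: "x \<in> fnorms d" and e: "fmult d y x = sup_norm d"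
        unfolding Units_def by (auto simp: fnorm_monoid_def)
      obtain P where P: "condH d P" "y = fnorm d P" using y by (auto simp: mem_fnorms)
      obtain Q where Q: "condH d Q" "x = fnorm d Q" using x by (auto simp: mem_fnorms)
      have "fnorm d (prod_gen d P Q) = fnorm d (const_gen d (\<lambda>_. 1))"
        using e P Q by (simp add: fmult_eq one_gen)
      then have "nfn d (prod_gen d P Q) = nfn d (const_gen d (\<lambda>_. 1))"
        using P Q one_condH by (intro condH_fnorm_eq condH_prod) auto
      from unit_const[OF P(1) Q(1) this] show "y \<in> {fnorm d (const_gen d c) | c. \<forall>i\<in>{1..d}. 0 < c i}"
        using P by auto
    qed
  next
    show "{fnorm d (const_gen d c) | c. \<forall>i\<in>{1..d}. 0 < c i} \<subseteq> Units (fnorm_monoid d)"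
    proof
      fix y assume "y \<in> {fnorm d (const_gen d c) | c. \<forall>i\<in>{1..d}. 0 < c i}"
      then obtain c where c: "\<forall>i\<in>{1..d}. 0 < c i" and y: "y = fnorm d (const_gen d c)" by auto
      have ci: "\<forall>i\<in>{1..d}. 0 < 1 / c i" using c by auto
      note Hc = condH_const[OF c] and Hci = condH_const[OF ci]
      have e1: "fmult d y (fnorm d (const_gen d (\<lambda>i. 1 / c i))) = sup_norm d"
        unfolding y fmult_eq[OF Hc Hci] one_gen
        by (intro fnorm_eq_nfn condH_prod Hc Hci one_condH nfn_const_inv c)
      have e2: "fmult d (fnorm d (const_gen d (\<lambda>i. 1 / c i))) y = sup_norm d"
        unfolding y fmult_eq[OF Hci Hc] one_gen
        using nfn_const_inv[OF c] nfn_comm[OF Hc Hci]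
        by (intro fnorm_eq_nfn condH_prod Hc Hci one_condH) auto
      show "y \<in> Units (fnorm_monoid d)"
        unfolding Units_def using e1 e2 Hc Hci y
        by (auto simp: fnorm_monoid_def mem_fnorms intro!: bexI[where x="fnorm d (const_gen d (\<lambda>i. 1 / c i))"])
    qed
  qed
qed

end
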